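(* Let $\Theta\subseteq\mathbb{R}^p$ be convex, and let $f:\mathbb{R}^p\to\mathbb{R}$ be continuous and bounded below, such that for all $\theta,\theta'\in\Theta$ the directional derivative $\nabla f(\theta,\theta'-\theta)$ exists. Let $\theta_0\in\Theta$ and consider the sequence generated by: for $n\ge1$, choose a surrogate $g_n$ of $f$ and set $\theta_n\in\operatorname{arg\,min}_{\theta\in\Theta}g_n(\theta)$. Assume that for every $n\ge 1$, $g_n\in\mathcal{S}_L(f,\theta_{n-1})$ and that either all $g_n$ are majorant functions or all $g_n$ are $\rho$-strongly convex (for some $\rho>0$). Then $(f(\theta_n))_{n\ge0}$ is monotonically non-increasing and $(\theta_n)_{n\ge0}$ satisfies the asymptotic stationary point condition $$\liminf_{n\to+\infty}\ \inf_{\theta\in\Theta\setminus\{\theta_n\}}\frac{\nabla f(\theta_n,\theta-\theta_n)}{\|\theta-\theta_n\|_2}\ \ge 0.$$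
   Context: The directional derivative of $f$ at $\theta$ in direction $\theta'-\theta$ is $\nabla f(\theta,\theta'-\theta)\triangleq\lim_{t\to0^+}\frac{f(\theta+t(\theta'-\theta))-f(\theta)}{t}$. First-order surrogates: $g:\mathbb{R}^p\to\mathbb{R}$ belongs to $\mathcal{S}_L(f,\kappa)$ if (a) $g(\theta')\ge f(\theta')$ for all $\theta'\in\operatorname{arg\,min}_{\theta\in\Theta}g(\theta)$, and (b) $h\triangleq g-f$ is differentiable with $L$-Lipschitz gradient, $h(\kappa)=0$ and $\nabla h(\kappa)=0$. $g$ is called a majorant function if $g\ge f$ everywhere. The minimizers $\theta_n$ are assumed to exist. *)

theory Defs
  imports "HOL-Analysis.Analysis"
begin

definition dir_deriv_exists :: "('a::real_normed_vector \<Rightarrow> real) \<Rightarrow> 'a \<Rightarrow> 'a \<Rightarrow> bool" where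
  "dir_deriv_exists f x d \<longleftrightarrow> (\<exists>l. ((\<lambda>t. (f (x + t *\<^sub>R d) - f x) / t) \<longlongrightarrow> l) (at_right 0))"

definition dir_deriv :: "('a::real_normed_vector \<Rightarrow> real) \<Rightarrow> 'a \<Rightarrow> 'a \<Rightarrow> real" where
  "dir_deriv f x d = Lim (at_right 0) (\<lambda>t. (f (x + t *\<^sub>R d) - f x) / t)"

definition argmin_on :: "'a set \<Rightarrow> ('a \<Rightarrow> real) \<Rightarrow> 'a set" where
  "argmin_on Theta g = {x \<in> Theta. \<forall>y \<in> Theta. g x \<le> g y}"

definition first_order_surrogate ::
  "'a::euclidean_space set \<Rightarrow> real \<Rightarrow> ('a \<Rightarrow> real) \<Rightarrow> 'a \<Rightarrow> ('a \<Rightarrow> real) \<Rightarrow> bool" where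
  "first_order_surrogate Theta L f kappa g \<longleftrightarrow>
     (\<forall>x \<in> argmin_on Theta g. g x \<ge> f x) \<and>
     (\<exists>G. (\<forall>x. ((\<lambda>y. g y - f y) has_derivative (\<lambda>v. G x \<bullet> v)) (at x)) \<and>
          (\<forall>x y. norm (G x - G y) \<le> L * norm (x - y)) \<and>
          g kappa - f kappa = 0 \<and> G kappa = 0)"

definition majorant :: "('a \<Rightarrow> real) \<Rightarrow> ('a \<Rightarrow> real) \<Rightarrow> bool" where
  "majorant f g \<longleftrightarrow> (\<forall>x. g x \<ge> f x)"

definition strongly_convex :: "real \<Rightarrow> ('a::real_normed_vector \<Rightarrow> real) \<Rightarrow> bool" where
  "strongly_convex rho g \<longleftrightarrow> convex_on UNIV (\<lambda>x. g x - rho / 2 * (norm x)\<^sup>2)"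

end

theory Submission
  imports Defs
begin
lemma dir_of_has_derivative:
  fixes h :: "'a::real_inner \<Rightarrow> real"
  assumes "(h has_derivative (\<lambda>v. a \<bullet> v)) (at x)"
  shows "((\<lambda>t. (h (x + t *\<^sub>R d) - h x) / t) \<longlongrightarrow> a \<bullet> d) (at_right 0)"
proof -
  have l: "((\<lambda>t. x + t *\<^sub>R d) has_derivative (\<lambda>s. s *\<^sub>R d)) (at 0)"
    by (auto intro!: derivative_eq_intros)
  have "(h has_derivative (\<lambda>v. a \<bullet> v)) (at (x + 0 *\<^sub>R d))" using assms by simp
  from has_derivative_compose[OF l this]
  have "((\<lambda>t. h (x + t *\<^sub>R d)) has_derivative (\<lambda>s. a \<bullet> (s *\<^sub>R d))) (at 0)" .
  moreover have "(\<lambda>s. a \<bullet> (s *\<^sub>R d)) = (*) (a \<bullet> d)" by (auto simp: algebra_simps)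
  ultimately have "((\<lambda>t. h (x + t *\<^sub>R d)) has_real_derivative a \<bullet> d) (at 0)"
    by (simp add: has_field_derivative_def)
  hence "((\<lambda>t. (h (x + t *\<^sub>R d) - h x) / t) \<longlongrightarrow> a \<bullet> d) (at 0)"
    by (simp add: DERIV_def)
  thus ?thesis by (rule tendsto_mono[rotated]) (simp add: at_within_le_at)
qed

lemma descent:
  fixes h :: "'a::real_inner \<Rightarrow> real"
  assumes der: "\<And>z. (h has_derivative (\<lambda>v. G z \<bullet> v)) (at z)"
    and lip: "\<And>x y. norm (G x - G y) \<le> L * norm (x - y)"
  shows "h (x + d) \<le> h x + G x \<bullet> d + L / 2 * (norm d)\<^sup>2"
proof -
  define \<psi> where "\<psi> t = h (x + t *\<^sub>R d) - t * (G x \<bullet> d) - L / 2 * t\<^sup>2 * (norm d)\<^sup>2" for t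
  define \<psi>' where "\<psi>' t = G (x + t *\<^sub>R d) \<bullet> d - G x \<bullet> d - L * t * (norm d)\<^sup>2" for t
  have D: "DERIV \<psi> t :> \<psi>' t" for t
  proof -
    have l: "((\<lambda>t. x + t *\<^sub>R d) has_derivative (\<lambda>s. s *\<^sub>R d)) (at t)"
      by (auto intro!: derivative_eq_intros)
    from has_derivative_compose[OF l der]
    have "((\<lambda>t. h (x + t *\<^sub>R d)) has_derivative (\<lambda>s. G (x + t *\<^sub>R d) \<bullet> (s *\<^sub>R d))) (at t)" .
    moreover have "(\<lambda>s. G (x + t *\<^sub>R d) \<bullet> (s *\<^sub>R d)) = (*) (G (x + t *\<^sub>R d) \<bullet> d)" by (auto simp: algebra_simps)
    ultimately have "((\<lambda>t. h (x + t *\<^sub>R d)) has_real_derivative G (x + t *\<^sub>R d) \<bullet> d) (at t)"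
      by (simp add: has_field_derivative_def)
    then show ?thesis unfolding \<psi>_def \<psi>'_def
      by (auto intro!: derivative_eq_intros)
  qed
  obtain z where z: "0 < z" "z < 1" "\<psi> 1 - \<psi> 0 = (1 - 0) * \<psi>' z"
    using MVT2[of 0 1 \<psi> \<psi>'] D by auto
  have "(G (x + z *\<^sub>R d) - G x) \<bullet> d \<le> norm (G (x + z *\<^sub>R d) - G x) * norm d"
    by (rule norm_cauchy_schwarz)
  also have "\<dots> \<le> L * norm (z *\<^sub>R d) * norm d"
    using lip[of "x + z *\<^sub>R d" x] by (simp add: mult_right_mono)
  also have "\<dots> = L * z * (norm d)\<^sup>2" using z by (simp add: power2_eq_square)
  finally have "\<psi>' z \<le> 0" unfolding \<psi>'_def by (simp add: inner_diff_left)
  with z have "\<psi> 1 \<le> \<psi> 0" by simp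
  thus ?thesis unfolding \<psi>_def by simp
qed

lemma grad_bound:
  fixes h :: "'a::real_inner \<Rightarrow> real"
  assumes der: "\<And>z. (h has_derivative (\<lambda>v. G z \<bullet> v)) (at z)"
    and lip: "\<And>x y. norm (G x - G y) \<le> L * norm (x - y)"
    and nn: "\<And>z. h z \<ge> 0" and L: "L \<ge> 0"
  shows "(norm (G x))\<^sup>2 \<le> 2 * (L + 1) * h x"
proof -
  define t where "t = 1 / (L + 1)"
  have t: "t > 0" "L * t \<le> 1" using L by (auto simp: t_def field_simps)
  define N where "N = (norm (G x))\<^sup>2"
  have N: "N \<ge> 0" "G x \<bullet> G x = N" by (auto simp: N_def power2_norm_eq_inner)
  have "0 \<le> h (x + (- t *\<^sub>R G x))" by (rule nn)
  also have "\<dots> \<le> h x + G x \<bullet> (- t *\<^sub>R G x) + L / 2 * (norm (- t *\<^sub>R G x))\<^sup>2"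
    by (rule descent[OF der lip])
  also have "\<dots> = h x - t * N + L / 2 * t\<^sup>2 * N"
    using t by (simp add: N N_def power_mult_distrib)
  finally have 1: "t * N - L / 2 * t\<^sup>2 * N \<le> h x" by simp
  have "t * N / 2 \<le> t * N - L / 2 * t\<^sup>2 * N"
  proof -
    have "L / 2 * t\<^sup>2 * N = (L * t) * (t * N) / 2" by (simp add: power2_eq_square)
    also have "\<dots> \<le> 1 * (t * N) / 2" using t N by (intro divide_right_mono mult_right_mono) auto
    finally have "L / 2 * t\<^sup>2 * N \<le> t * N / 2" by simp
    thus ?thesis by linarith
  qed
  with 1 have "t * N \<le> 2 * h x" by linarith
  hence "N \<le> 2 * h x / t" using t by (simp add: field_simps)
  thus ?thesis by (simp add: N_def t_def algebra_simps)
qed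

lemma aux:
  fixes gz gx gy r nz nx ny D t :: real
  assumes "gz - r/2*nz \<le> (1-t)*(gx - r/2*nx) + t*(gy - r/2*ny)" "nz = (1-t)*nx + t*ny - t*(1-t)*D" "gx \<le> gz"
  shows "t*(r/2*D*(1-t)) \<le> t*(gy-gx)"
proof -
  have e1: "gz - r/2*((1-t)*nx + t*ny - t*(1-t)*D) = gz - r/2*(1-t)*nx - r/2*t*ny + r/2*t*(1-t)*D"
    by (simp add: field_simps)
  have e2: "(1-t)*(gx - r/2*nx) + t*(gy - r/2*ny) = gx - t*gx - r/2*(1-t)*nx + t*gy - r/2*t*ny"
    by (simp add: algebra_simps)
  have e3: "t*(r/2*D*(1-t)) = r/2*t*(1-t)*D" by simp
  have e4: "t*(gy-gx) = t*gy - t*gx" by (simp add: algebra_simps)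
  have h1: "gz - r/2*((1-t)*nx + t*ny - t*(1-t)*D) \<le> (1-t)*(gx - r/2*nx) + t*(gy - r/2*ny)"
    using assms(1) assms(2) by simp
  have "r/2*t*(1-t)*D \<le> t*gy - t*gx" using h1[unfolded e1 e2] assms(3) by linarith
  thus ?thesis by (simp add: algebra_simps)
qed

lemma strong_min:
  fixes g :: "'a::real_inner \<Rightarrow> real"
  assumes sc: "strongly_convex rho g" and cv: "convex Theta"
    and x: "x \<in> argmin_on Theta g" and y: "y \<in> Theta"
  shows "g y \<ge> g x + rho / 2 * (norm (y - x))\<^sup>2"
proof -
  define B where "B = rho / 2 * (norm (y - x))\<^sup>2"
  define A where "A = g y - g x"
  have xT: "x \<in> Theta" and xm: "\<And>z. z \<in> Theta \<Longrightarrow> g x \<le> g z" using x by (auto simp: argmin_on_def)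
  have key: "B * (1 - t) \<le> A" if t: "0 < t" "t < 1" for t
  proof -
    define z where "z = (1 - t) *\<^sub>R x + t *\<^sub>R y"
    have "z \<in> Theta" using cv xT y t unfolding z_def by (intro convexD) auto
    hence gz: "g x \<le> g z" by (rule xm)
    have cq: "g z - rho / 2 * (norm z)\<^sup>2 \<le> (1 - t) * (g x - rho / 2 * (norm x)\<^sup>2) + t * (g y - rho / 2 * (norm y)\<^sup>2)"
      using sc t unfolding strongly_convex_def z_def
      by (intro convex_onD[of UNIV, simplified]) auto
    have nz: "(norm z)\<^sup>2 = (1 - t) * (norm x)\<^sup>2 + t * (norm y)\<^sup>2 - t * (1 - t) * (norm (y - x))\<^sup>2"
      unfolding z_def power2_norm_eq_inner
      by (simp add: inner_diff_left inner_diff_right inner_add_left inner_add_right algebra_simps inner_commute power2_eq_square)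
    have "t * (B * (1 - t)) \<le> t * A"
      using aux[OF cq nz gz] unfolding A_def B_def by (simp add: algebra_simps)
    thus ?thesis using t by simp
  qed
  show ?thesis
  proof (rule ccontr)
    assume "\<not> ?thesis"
    hence AB: "A < B" by (simp add: A_def B_def)
    have "B * (1 - 1/2) \<le> A" by (rule key) auto
    hence A0: "A \<ge> B / 2" by simp
    define t where "t = (B - A) / (2 * B)"
    have Bp: "B > 0" using AB A0 by linarith
    have t: "0 < t" "t < 1" using AB A0 Bp by (auto simp: t_def field_simps)
    have "B * (1 - t) = (A + B) / 2" using Bp by (simp add: t_def field_simps)
    with key[OF t] AB show False by simp
  qed
qed

theorem proposition2p1:
  fixes Theta :: "(real ^ 'p) set"
    and f :: "real ^ 'p \<Rightarrow> real"
    and g :: "nat \<Rightarrow> real ^ 'p \<Rightarrow> real"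
    and theta :: "nat \<Rightarrow> real ^ 'p"
    and L :: real
  assumes "convex Theta"
    and "continuous_on UNIV f"
    and "bdd_below (range f)"
    and "\<forall>x \<in> Theta. \<forall>y \<in> Theta. dir_deriv_exists f x (y - x)"
    and "theta 0 \<in> Theta"
    and "\<forall>n \<ge> 1. theta n \<in> argmin_on Theta (g n)"
    and "\<forall>n \<ge> 1. first_order_surrogate Theta L f (theta (n - 1)) (g n)"
    and "(\<forall>n \<ge> 1. majorant f (g n)) \<or> (\<exists>rho > 0. \<forall>n \<ge> 1. strongly_convex rho (g n))"
  shows "(\<forall>n. f (theta (Suc n)) \<le> f (theta n)) \<and>
         liminf (\<lambda>n. INF x \<in> Theta - {theta n}.
            ereal (dir_deriv f (theta n) (x - theta n) / norm (x - theta n))) \<ge> 0"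
proof -
  note cv = assms(1) and A4 = assms(4) and A6 = assms(6) and A7 = assms(7) and A8 = assms(8)
  have thT: "theta n \<in> Theta" for n
    using assms(5) A6 by (cases n) (auto simp: argmin_on_def)
  have thmin: "g (Suc n) (theta (Suc n)) \<le> g (Suc n) y" if "y \<in> Theta" for n y
    using A6 that by (auto simp: argmin_on_def)
  have "\<forall>n. \<exists>Gn. 1 \<le> n \<longrightarrow> (\<forall>x. ((\<lambda>y. g n y - f y) has_derivative (\<lambda>v. Gn x \<bullet> v)) (at x)) \<and>
          (\<forall>x y. norm (Gn x - Gn y) \<le> L * norm (x - y)) \<and>
          g n (theta (n - 1)) - f (theta (n - 1)) = 0 \<and> Gn (theta (n - 1)) = 0"
  proof
    fix n :: nat
    show "\<exists>Gn. 1 \<le> n \<longrightarrow> (\<forall>x. ((\<lambda>y. g n y - f y) has_derivative (\<lambda>v. Gn x \<bullet> v)) (at x)) \<and>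
          (\<forall>x y. norm (Gn x - Gn y) \<le> L * norm (x - y)) \<and>
          g n (theta (n - 1)) - f (theta (n - 1)) = 0 \<and> Gn (theta (n - 1)) = 0"
    proof (cases "1 \<le> n")
      case True
      with A7 have "first_order_surrogate Theta L f (theta (n - 1)) (g n)" by blast
      then obtain Gn where "(\<forall>x. ((\<lambda>y. g n y - f y) has_derivative (\<lambda>v. Gn x \<bullet> v)) (at x)) \<and>
          (\<forall>x y. norm (Gn x - Gn y) \<le> L * norm (x - y)) \<and>
          g n (theta (n - 1)) - f (theta (n - 1)) = 0 \<and> Gn (theta (n - 1)) = 0"
        unfolding first_order_surrogate_def by blast
      thus ?thesis by blast
    qed auto
  qed
  from choice[OF this] obtain G where G': "\<forall>n. 1 \<le> n \<longrightarrow> (\<forall>x. ((\<lambda>y. g n y - f y) has_derivative (\<lambda>v. G n x \<bullet> v)) (at x)) \<and>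
          (\<forall>x y. norm (G n x - G n y) \<le> L * norm (x - y)) \<and>
          g n (theta (n - 1)) - f (theta (n - 1)) = 0 \<and> G n (theta (n - 1)) = 0"
    by blast
  have Gd: "((\<lambda>y. g (Suc n) y - f y) has_derivative (\<lambda>v. G (Suc n) x \<bullet> v)) (at x)" for n x
    using G'[rule_format, of "Suc n"] by auto
  have Gl: "norm (G (Suc n) x - G (Suc n) y) \<le> L * norm (x - y)" for n x y
    using G'[rule_format, of "Suc n"] by auto
  have G0: "g (Suc n) (theta n) = f (theta n)" "G (Suc n) (theta n) = 0" for n
    using G'[rule_format, of "Suc n"] by auto
  have sa: "f (theta (Suc n)) \<le> g (Suc n) (theta (Suc n))" for n
    using A7 A6 unfolding first_order_surrogate_def by auto
  have mono: "f (theta (Suc n)) \<le> f (theta n)" for n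
    using sa[of n] thmin[OF thT[of n], of n] G0(1)[of n] by linarith
  obtain i :: 'p where True by auto
  have "norm (G (Suc 0) 0 - G (Suc 0) (axis i 1)) \<le> L" using Gl[of 0 0 "axis i 1"] by simp
  hence L0: "L \<ge> 0" using norm_ge_zero order_trans by blast
  obtain B where B: "\<And>x. B \<le> f x" using assms(3) by (auto simp: bdd_below_def)
  have "decseq (\<lambda>n. f (theta n))" using mono by (simp add: decseq_Suc_iff)
  then obtain l where l: "(\<lambda>n. f (theta n)) \<longlonglongrightarrow> l"
    using decseq_convergent[of "\<lambda>n. f (theta n)" B] B by blast
  have dif: "(\<lambda>n. f (theta n) - f (theta (Suc n))) \<longlonglongrightarrow> 0"
    using tendsto_diff[OF l LIMSEQ_Suc[OF l]] by simp
  define e where "e n = norm (G n (theta n))" for n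
  have eS: "(\<lambda>n. e (Suc n)) \<longlonglongrightarrow> 0"
    using A8
  proof
    assume maj: "\<forall>n\<ge>1. majorant f (g n)"
    define hn where "hn n = g (Suc n) (theta (Suc n)) - f (theta (Suc n))" for n
    have hb: "0 \<le> hn n" "hn n \<le> f (theta n) - f (theta (Suc n))" for n
      using maj sa[of n] thmin[OF thT[of n], of n] G0(1)[of n] unfolding hn_def majorant_def
      by auto
    have hn0: "hn \<longlonglongrightarrow> 0"
      by (rule tendsto_sandwich[of "\<lambda>_. 0" _ _ "\<lambda>n. f (theta n) - f (theta (Suc n))"])
         (use hb dif in auto)
    have eb: "e (Suc n) \<le> sqrt (2 * (L + 1) * hn n)" for n
    proof -
      have "(e (Suc n))\<^sup>2 \<le> 2 * (L + 1) * hn n"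
        unfolding e_def hn_def
        by (rule grad_bound[OF Gd Gl _ L0]) (use maj in \<open>auto simp: majorant_def\<close>)
      thus ?thesis by (simp add: real_le_rsqrt e_def)
    qed
    have lim: "(\<lambda>n. sqrt (2 * (L + 1) * hn n)) \<longlonglongrightarrow> sqrt (2 * (L + 1) * 0)"
      by (intro tendsto_intros hn0)
    show ?thesis
    proof (rule tendsto_sandwich[of "\<lambda>_. 0" _ _ "\<lambda>n. sqrt (2 * (L + 1) * hn n)"])
      show "\<forall>\<^sub>F n in sequentially. 0 \<le> e (Suc n)" by (simp add: e_def)
      show "\<forall>\<^sub>F n in sequentially. e (Suc n) \<le> sqrt (2 * (L + 1) * hn n)" using eb by simp
      show "(\<lambda>_. 0::real) \<longlonglongrightarrow> 0" by simp
      show "(\<lambda>n. sqrt (2 * (L + 1) * hn n)) \<longlonglongrightarrow> 0" using lim by simp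
    qed
  next
    assume "\<exists>rho>0. \<forall>n\<ge>1. strongly_convex rho (g n)"
    then obtain rho where rho: "rho > 0" "\<And>n. n \<ge> 1 \<Longrightarrow> strongly_convex rho (g n)" by auto
    have db: "(norm (theta (Suc n) - theta n))\<^sup>2 \<le> 2 / rho * (f (theta n) - f (theta (Suc n)))" for n
    proof -
      have "g (Suc n) (theta n) \<ge> g (Suc n) (theta (Suc n)) + rho / 2 * (norm (theta n - theta (Suc n)))\<^sup>2"
        by (rule strong_min[OF rho(2) cv]) (use A6 thT in auto)
      hence "rho / 2 * (norm (theta (Suc n) - theta n))\<^sup>2 \<le> f (theta n) - f (theta (Suc n))"
        using sa[of n] G0(1)[of n] by (simp add: norm_minus_commute)
      thus ?thesis using rho(1) by (simp add: field_simps)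
    qed
    have eb: "e (Suc n) \<le> L * sqrt (2 / rho * (f (theta n) - f (theta (Suc n))))" for n
    proof -
      have "e (Suc n) = norm (G (Suc n) (theta (Suc n)) - G (Suc n) (theta n))"
        using G0(2)[of n] by (simp add: e_def)
      also have "\<dots> \<le> L * norm (theta (Suc n) - theta n)" by (rule Gl)
      also have "\<dots> \<le> L * sqrt (2 / rho * (f (theta n) - f (theta (Suc n))))"
        using db[of n] L0 by (intro mult_left_mono) (auto simp: real_le_rsqrt)
      finally show ?thesis .
    qed
    have lim: "(\<lambda>n. L * sqrt (2 / rho * (f (theta n) - f (theta (Suc n))))) \<longlonglongrightarrow> L * sqrt (2 / rho * 0)"
      by (intro tendsto_intros dif)
    show ?thesis
    proof (rule tendsto_sandwich[of "\<lambda>_. 0" _ _ "\<lambda>n. L * sqrt (2 / rho * (f (theta n) - f (theta (Suc n))))"])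
      show "\<forall>\<^sub>F n in sequentially. 0 \<le> e (Suc n)" by (simp add: e_def)
      show "\<forall>\<^sub>F n in sequentially. e (Suc n) \<le> L * sqrt (2 / rho * (f (theta n) - f (theta (Suc n))))" using eb by simp
      show "(\<lambda>_. 0::real) \<longlonglongrightarrow> 0" by simp
      show "(\<lambda>n. L * sqrt (2 / rho * (f (theta n) - f (theta (Suc n))))) \<longlonglongrightarrow> 0" using lim by simp
    qed
  qed
  hence e0: "e \<longlonglongrightarrow> 0" by (rule LIMSEQ_imp_Suc)
  have claim: "- e (Suc n) \<le> dir_deriv f (theta (Suc n)) (x - theta (Suc n)) / norm (x - theta (Suc n))"
    if x: "x \<in> Theta" "x \<noteq> theta (Suc n)" for n x
  proof -
    define th where "th = theta (Suc n)"
    define d where "d = x - th"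
    have dn: "norm d > 0" using x by (simp add: d_def th_def)
    obtain l where lf: "((\<lambda>t. (f (th + t *\<^sub>R d) - f th) / t) \<longlongrightarrow> l) (at_right 0)"
      using A4 thT x unfolding dir_deriv_exists_def d_def th_def by blast
    have dd: "dir_deriv f th d = l"
      unfolding dir_deriv_def using lf by (intro tendsto_Lim) auto
    have lh: "((\<lambda>t. ((g (Suc n) (th + t *\<^sub>R d) - f (th + t *\<^sub>R d)) - (g (Suc n) th - f th)) / t)
        \<longlongrightarrow> G (Suc n) th \<bullet> d) (at_right 0)"
      by (rule dir_of_has_derivative[OF Gd])
    from tendsto_add[OF lf lh]
    have lg: "((\<lambda>t. (f (th + t *\<^sub>R d) - f th) / t + ((g (Suc n) (th + t *\<^sub>R d) - f (th + t *\<^sub>R d)) - (g (Suc n) th - f th)) / t)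
        \<longlongrightarrow> l + G (Suc n) th \<bullet> d) (at_right 0)" .
    have ev: "eventually (\<lambda>t. 0 \<le> (f (th + t *\<^sub>R d) - f th) / t + ((g (Suc n) (th + t *\<^sub>R d) - f (th + t *\<^sub>R d)) - (g (Suc n) th - f th)) / t) (at_right 0)"
      unfolding eventually_at_right_field
    proof (intro exI[of _ 1] conjI allI impI)
      fix t :: real assume t0: "0 < t" and t1: "t < 1"
      note t = t0 t1
      have "th + t *\<^sub>R d = (1 - t) *\<^sub>R th + t *\<^sub>R x" by (simp add: d_def algebra_simps)
      also have "\<dots> \<in> Theta" using cv thT x t unfolding th_def by (intro convexD) auto
      finally have "g (Suc n) th \<le> g (Suc n) (th + t *\<^sub>R d)" unfolding th_def by (rule thmin)
      hence "0 \<le> (g (Suc n) (th + t *\<^sub>R d) - g (Suc n) th) / t" using t by simp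
      also have "\<dots> = (f (th + t *\<^sub>R d) - f th) / t + ((g (Suc n) (th + t *\<^sub>R d) - f (th + t *\<^sub>R d)) - (g (Suc n) th - f th)) / t"
        by (simp add: add_divide_distrib[symmetric])
      finally show "0 \<le> \<dots>" .
    qed auto
    have "0 \<le> l + G (Suc n) th \<bullet> d"
      by (rule tendsto_lowerbound[OF lg ev]) simp
    moreover have "G (Suc n) th \<bullet> d \<le> e (Suc n) * norm d"
      unfolding e_def th_def by (rule norm_cauchy_schwarz)
    ultimately have "- e (Suc n) * norm d \<le> l" by linarith
    hence "- e (Suc n) \<le> l / norm d" using dn by (simp add: pos_le_divide_eq)
    thus ?thesis using dd by (simp add: d_def th_def)
  qed
  have ev: "eventually (\<lambda>n. ereal (- e n) \<le> (INF x \<in> Theta - {theta n}.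
            ereal (dir_deriv f (theta n) (x - theta n) / norm (x - theta n)))) sequentially"
    unfolding eventually_sequentially
  proof (intro exI[of _ 1] allI impI)
    fix n :: nat assume "1 \<le> n"
    then obtain m where n: "n = Suc m" by (cases n) auto
    show "ereal (- e n) \<le> (INF x \<in> Theta - {theta n}.
            ereal (dir_deriv f (theta n) (x - theta n) / norm (x - theta n)))"
      unfolding n by (rule INF_greatest) (use claim in auto)
  qed
  have "liminf (\<lambda>n. ereal (- e n)) = ereal (- 0)"
    by (rule lim_imp_Liminf) (use tendsto_minus[OF e0] in \<open>auto intro!: tendsto_ereal\<close>)
  hence "0 \<le> liminf (\<lambda>n. ereal (- e n))" by (simp add: zero_ereal_def)
  also have "\<dots> \<le> liminf (\<lambda>n. INF x \<in> Theta - {theta n}.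
            ereal (dir_deriv f (theta n) (x - theta n) / norm (x - theta n)))"
    by (rule Liminf_mono[OF ev])
  finally show ?thesis using mono by auto
qed

end
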